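(* The complement of $\mathcal S_1\cup\mathcal S_2$ in the invariant torsion variety $\mathcal M\cong\mathbb{RP}^1\times\mathbb{RP}^2$ contains exactly two components $\mathcal M_\pm$. The isomorphism classes of the Lie algebras $\mathfrak g_{\mathbf x,\mathbf y}$ corresponding to points of $\mathcal M$ are as follows: (1) points of $\mathcal M_+$ correspond to the semi-simple Lie algebra $\mathfrak{so}(3)\oplus\mathfrak{so}(3)$; (2) points of $\mathcal M_-$ correspond to the semi-simple Lie algebra $\mathfrak{so}(3,\mathbb C)$; (3) points of $\mathcal S_1\setminus \mathcal C$ correspond to the semi-direct product $\mathfrak{so}(3)\ltimes\mathbb R^3$; (4) points of $\mathcal S_2\setminus \mathcal C$ correspond to the direct sum $\mathfrak{so}(3)\oplus\mathbb R^3$; (5) points of $\mathcal C = \mathcal S_1\cap \mathcal S_2$ correspond to the nilpotent Lie algebra $(0,0,0,12,13,23)$ (i.e. with a basis satisfying $df^1=df^2=df^3=0$, $df^4=f^{12}$, $df^5=f^{13}$, $df^6=f^{23}$).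
   Context: Represent a point of $\mathcal M\cong\mathbb{RP}^1\times\mathbb{RP}^2$ by a pair of nonzero polynomials $\mathbf x=x_1u_1+x_2u_2$, $\mathbf y=y_1u_1^2+y_2u_1u_2+y_3u_2^2$ (up to independent scaling). To it corresponds the Lie algebra $\mathfrak g_{\mathbf x,\mathbf y}$ with a basis $e^1,\dots,e^6$ of its dual satisfying ($e^{ij}=e^i\wedge e^j$): $de^1=(x_2y_1-x_1y_2)e^{35}-x_1y_3(e^{36}+e^{45})-x_2y_3e^{46}$, $de^3=-(x_2y_1-x_1y_2)e^{15}+x_1y_3(e^{16}+e^{25})+x_2y_3e^{26}$, $de^5=(x_2y_1-x_1y_2)e^{13}-x_1y_3(e^{14}+e^{23})-x_2y_3e^{24}$, $de^2=x_1y_1e^{35}-(x_1y_3-y_2x_2)e^{46}+x_2y_1(e^{36}+e^{45})$, $de^4=-x_1y_1e^{15}+(x_1y_3-y_2x_2)e^{26}-x_2y_1(e^{16}+e^{25})$, $de^6=x_1y_1e^{13}-(x_1y_3-y_2x_2)e^{24}+x_2y_1(e^{14}+e^{23})$ (these are exactly the left-invariant $SO(3)$-structures with invariant intrinsic torsion whose flat connection has invariant torsion, up to scale). Let $\Delta(\mathbf y)=y_2^2-4y_1y_3$ and $R(\mathbf x,\mathbf y)=x_2^2y_1+y_3x_1^2-y_2x_2x_1$ (discriminant and resultant). Define the subvarieties $\mathcal M_+=\{\Delta>0,R\neq0\}$, $\mathcal M_-=\{\Delta<0,R\neq0\}$, $\mathcal S_1=\{\Delta=0\}$, $\mathcal S_2=\{R=0\}$,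 $\mathcal C=\mathcal S_1\cap\mathcal S_2$ (the locus where $\mathbf y$ is a multiple of $\mathbf x^2$). *)

theory Defs
  imports "HOL-Analysis.Analysis"
begin

text \<open>The 2-form e^{ij} on real^6 (indices 1..6; note that in the numeral type 6
  the literal 6 denotes the sixth, distinct, element).\<close>
definition e2 :: "6 \<Rightarrow> 6 \<Rightarrow> real^6 \<Rightarrow> real^6 \<Rightarrow> real" where
  "e2 i j X Y = X$i * Y$j - X$j * Y$i"

text \<open>Lie bracket determined by differentials de^1..de^6 via de^k(X,Y) = - e^k([X,Y]).\<close>
definition bracket_of_d ::
  "(real^6 \<Rightarrow> real^6 \<Rightarrow> real) \<Rightarrow> (real^6 \<Rightarrow> real^6 \<Rightarrow> real) \<Rightarrow> (real^6 \<Rightarrow> real^6 \<Rightarrow> real) \<Rightarrow>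
   (real^6 \<Rightarrow> real^6 \<Rightarrow> real) \<Rightarrow> (real^6 \<Rightarrow> real^6 \<Rightarrow> real) \<Rightarrow> (real^6 \<Rightarrow> real^6 \<Rightarrow> real) \<Rightarrow>
   real^6 \<Rightarrow> real^6 \<Rightarrow> real^6" where
  "bracket_of_d d1 d2 d3 d4 d5 d6 X Y =
     (\<chi> k. - (if k = 1 then d1 X Y else if k = 2 then d2 X Y else if k = 3 then d3 X Y
              else if k = 4 then d4 X Y else if k = 5 then d5 X Y else d6 X Y))"

text \<open>The Lie algebra g_{x,y}, x = x1 u1 + x2 u2, y = y1 u1^2 + y2 u1 u2 + y3 u2^2.\<close>
definition g_xy :: "real^2 \<Rightarrow> real^3 \<Rightarrow> real^6 \<Rightarrow> real^6 \<Rightarrow> real^6" where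
  "g_xy x y = (let x1 = x$1; x2 = x$2; y1 = y$1; y2 = y$2; y3 = y$3 in
     bracket_of_d
      (\<lambda>X Y. (x2*y1 - x1*y2) * e2 3 5 X Y - x1*y3 * (e2 3 6 X Y + e2 4 5 X Y) - x2*y3 * e2 4 6 X Y)
      (\<lambda>X Y. x1*y1 * e2 3 5 X Y - (x1*y3 - y2*x2) * e2 4 6 X Y + x2*y1 * (e2 3 6 X Y + e2 4 5 X Y))
      (\<lambda>X Y. - (x2*y1 - x1*y2) * e2 1 5 X Y + x1*y3 * (e2 1 6 X Y + e2 2 5 X Y) + x2*y3 * e2 2 6 X Y)
      (\<lambda>X Y. - x1*y1 * e2 1 5 X Y + (x1*y3 - y2*x2) * e2 2 6 X Y - x2*y1 * (e2 1 6 X Y + e2 2 5 X Y))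
      (\<lambda>X Y. (x2*y1 - x1*y2) * e2 1 3 X Y - x1*y3 * (e2 1 4 X Y + e2 2 3 X Y) - x2*y3 * e2 2 4 X Y)
      (\<lambda>X Y. x1*y1 * e2 1 3 X Y - (x1*y3 - y2*x2) * e2 2 4 X Y + x2*y1 * (e2 1 4 X Y + e2 2 3 X Y)))"

definition disc :: "real^3 \<Rightarrow> real" where
  "disc y = (y$2)^2 - 4 * y$1 * y$3"
definition resultant :: "real^2 \<Rightarrow> real^3 \<Rightarrow> real" where
  "resultant x y = (x$2)^2 * y$1 + y$3 * (x$1)^2 - y$2 * x$2 * x$1"

text \<open>Representatives (pairs of nonzero polynomials) of the subvarieties.\<close>
definition Mrep :: "((real^2) \<times> (real^3)) set" where
  "Mrep = {(x, y). x \<noteq> 0 \<and> y \<noteq> 0}"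
definition Mplus :: "((real^2) \<times> (real^3)) set" where
  "Mplus = {(x, y) \<in> Mrep. disc y > 0 \<and> resultant x y \<noteq> 0}"
definition Mminus :: "((real^2) \<times> (real^3)) set" where
  "Mminus = {(x, y) \<in> Mrep. disc y < 0 \<and> resultant x y \<noteq> 0}"
definition S1 :: "((real^2) \<times> (real^3)) set" where
  "S1 = {(x, y) \<in> Mrep. disc y = 0}"
definition S2 :: "((real^2) \<times> (real^3)) set" where
  "S2 = {(x, y) \<in> Mrep. resultant x y = 0}"
definition Cset :: "((real^2) \<times> (real^3)) set" where
  "Cset = S1 \<inter> S2"

text \<open>Standard embedding of RP^{n-1} into symmetric matrices, v \<mapsto> v v^T / |v|^2,
  giving a homeomorphic model of M = RP^1 \<times> RP^2 inside a Euclidean space.\<close>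
definition proj_emb :: "real^'n \<Rightarrow> real^'n^'n" where
  "proj_emb v = (\<chi> i j. v$i * v$j / (v \<bullet> v))"
definition M_emb :: "(real^2) \<times> (real^3) \<Rightarrow> (real^2^2) \<times> (real^3^3)" where
  "M_emb p = (proj_emb (fst p), proj_emb (snd p))"

definition lie_iso :: "(real^6 \<Rightarrow> real^6 \<Rightarrow> real^6) \<Rightarrow> (real^6 \<Rightarrow> real^6 \<Rightarrow> real^6) \<Rightarrow> bool" where
  "lie_iso b1 b2 \<longleftrightarrow> (\<exists>f. linear f \<and> bij f \<and> (\<forall>X Y. f (b1 X Y) = b2 (f X) (f Y)))"

definition lo :: "real^6 \<Rightarrow> real^3" where "lo X = (\<chi> i. if i = 1 then X$1 else if i = 2 then X$2 else X$3)"
definition hi :: "real^6 \<Rightarrow> real^3" where "hi X = (\<chi> i. if i = 1 then X$4 else if i = 2 then X$5 else X$6)"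
definition join :: "real^3 \<Rightarrow> real^3 \<Rightarrow> real^6" where
  "join a b = (\<chi> k. if k = 1 then a$1 else if k = 2 then a$2 else if k = 3 then a$3
                    else if k = 4 then b$1 else if k = 5 then b$2 else b$3)"

text \<open>Model Lie algebras (so(3) realised as (real^3, cross product)).\<close>
definition so3_so3 :: "real^6 \<Rightarrow> real^6 \<Rightarrow> real^6" where
  "so3_so3 X Y = join (cross3 (lo X) (lo Y)) (cross3 (hi X) (hi Y))"
text \<open>so(3,C) as a real Lie algebra: element a + i b with a, b in so(3).\<close>
definition so3C :: "real^6 \<Rightarrow> real^6 \<Rightarrow> real^6" where
  "so3C X Y = join (cross3 (lo X) (lo Y) - cross3 (hi X) (hi Y))
                   (cross3 (lo X) (hi Y) + cross3 (hi X) (lo Y))"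
definition so3_semi_R3 :: "real^6 \<Rightarrow> real^6 \<Rightarrow> real^6" where
  "so3_semi_R3 X Y = join (cross3 (lo X) (lo Y)) (cross3 (lo X) (hi Y) - cross3 (lo Y) (hi X))"
definition so3_sum_R3 :: "real^6 \<Rightarrow> real^6 \<Rightarrow> real^6" where
  "so3_sum_R3 X Y = join (cross3 (lo X) (lo Y)) 0"
definition nil_alg :: "real^6 \<Rightarrow> real^6 \<Rightarrow> real^6" where
  "nil_alg = bracket_of_d (\<lambda>X Y. 0) (\<lambda>X Y. 0) (\<lambda>X Y. 0) (e2 1 2) (e2 1 3) (e2 2 3)"

end

theory Submission
  imports Defs
begin


lemma exhaust_6:
  fixes x :: 6
  shows "x = 1 \<or> x = 2 \<or> x = 3 \<or> x = 4 \<or> x = 5 \<or> x = 6"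
proof (induct x)
  case (of_int z)
  then have "z = 0 \<or> z = 1 \<or> z = 2 \<or> z = 3 \<or> z = 4 \<or> z = 5" by fastforce
  then show ?case by auto
qed

lemma forall_6: "(\<forall>i::6. P i) \<longleftrightarrow> P 1 \<and> P 2 \<and> P 3 \<and> P 4 \<and> P 5 \<and> P 6"
  by (metis exhaust_6)

lemma vec6_eq: "(X::real^6) = Y \<longleftrightarrow> X$1 = Y$1 \<and> X$2 = Y$2 \<and> X$3 = Y$3 \<and> X$4 = Y$4 \<and> X$5 = Y$5 \<and> X$6 = Y$6"
  by (simp add: vec_eq_iff forall_6)

definition tb :: "real \<Rightarrow> real \<Rightarrow> real \<Rightarrow> real \<Rightarrow> real \<Rightarrow> real \<Rightarrow> real^6 \<Rightarrow> real^6 \<Rightarrow> real^6" where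
  "tb p0 p1 q0 q1 r0 r1 X Y = (let a1 = X$1; b1 = X$2; a2 = X$3; b2 = X$4; a3 = X$5; b3 = X$6;
     c1 = Y$1; d1 = Y$2; c2 = Y$3; d2 = Y$4; c3 = Y$5; d3 = Y$6;
     A1 = a2*c3 - a3*c2; A2 = a3*c1 - a1*c3; A3 = a1*c2 - a2*c1;
     B1 = a2*d3 - a3*d2 + b2*c3 - b3*c2; B2 = a3*d1 - a1*d3 + b3*c1 - b1*c3; B3 = a1*d2 - a2*d1 + b1*c2 - b2*c1;
     C1 = b2*d3 - b3*d2; C2 = b3*d1 - b1*d3; C3 = b1*d2 - b2*d1 in
     (\<chi> k. if k = 1 then A1*p0 + B1*q0 + C1*r0 else if k = 2 then A1*p1 + B1*q1 + C1*r1
        else if k = 3 then A2*p0 + B2*q0 + C2*r0 else if k = 4 then A2*p1 + B2*q1 + C2*r1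
        else if k = 5 then A3*p0 + B3*q0 + C3*r0 else A3*p1 + B3*q1 + C3*r1))"

lemma g_eq: "g_xy x y = tb (x$1*y$2 - x$2*y$1) (-x$1*y$1) (x$1*y$3) (-x$2*y$1) (x$2*y$3) (x$1*y$3 - x$2*y$2)"
  by (simp add: fun_eq_iff vec6_eq g_xy_def tb_def bracket_of_d_def e2_def Let_def algebra_simps)

definition lm :: "real \<Rightarrow> real \<Rightarrow> real \<Rightarrow> real \<Rightarrow> real^6 \<Rightarrow> real^6" where
  "lm m00 m01 m10 m11 X = (\<chi> k. if k = 1 then m00*X$1 + m01*X$2 else if k = 2 then m10*X$1 + m11*X$2
      else if k = 3 then m00*X$3 + m01*X$4 else if k = 4 then m10*X$3 + m11*X$4
      else if k = 5 then m00*X$5 + m01*X$6 else m10*X$5 + m11*X$6)"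

lemma lm_hom:
  assumes "m00*p0 + m01*p1 = m00^2*g0 + 2*m00*m10*h0 + m10^2*k0"
    and "m10*p0 + m11*p1 = m00^2*g1 + 2*m00*m10*h1 + m10^2*k1"
    and "m00*q0 + m01*q1 = m00*m01*g0 + (m00*m11 + m10*m01)*h0 + m10*m11*k0"
    and "m10*q0 + m11*q1 = m00*m01*g1 + (m00*m11 + m10*m01)*h1 + m10*m11*k1"
    and "m00*r0 + m01*r1 = m01^2*g0 + 2*m01*m11*h0 + m11^2*k0"
    and "m10*r0 + m11*r1 = m01^2*g1 + 2*m01*m11*h1 + m11^2*k1"
  shows "lm m00 m01 m10 m11 (tb p0 p1 q0 q1 r0 r1 X Y) = tb g0 g1 h0 h1 k0 k1 (lm m00 m01 m10 m11 X) (lm m00 m01 m10 m11 Y)"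
  unfolding vec6_eq
  using assms
  apply (simp add: lm_def tb_def Let_def)
  apply (intro conjI)
  apply algebra+
  done

lemma lie_iso_trans: "lie_iso a b \<Longrightarrow> lie_iso b c \<Longrightarrow> lie_iso a c"
  unfolding lie_iso_def
proof (elim exE conjE)
  fix f g assume f: "linear f" "bij f" "\<forall>X Y. f (a X Y) = b (f X) (f Y)"
    and g: "linear g" "bij g" "\<forall>X Y. g (b X Y) = c (g X) (g Y)"
  show "\<exists>h. linear h \<and> bij h \<and> (\<forall>X Y. h (a X Y) = c (h X) (h Y))"
    by (rule exI[of _ "g \<circ> f"]) (use f g in \<open>auto simp: linear_compose bij_comp\<close>)
qed

lemma lie_iso_sym: "lie_iso a b \<Longrightarrow> lie_iso b a"
  unfolding lie_iso_def
proof (elim exE conjE)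
  fix f assume f: "linear f" "bij f" "\<forall>X Y. f (a X Y) = b (f X) (f Y)"
  obtain g where g: "linear g" "g \<circ> f = id"
    using linear_injective_left_inverse[OF f(1)] f(2) bij_is_inj by blast
  have gf: "g (f X) = X" for X using g(2) by (metis comp_apply id_apply)
  have fg: "f (g X) = X" for X
    using f(2) gf by (metis bij_def surj_def)
  have "bij g" using gf fg by (metis bijI' )
  moreover have "g (b X Y) = a (g X) (g Y)" for X Y
  proof -
    have "b X Y = b (f (g X)) (f (g Y))" by (simp add: fg)
    also have "\<dots> = f (a (g X) (g Y))" using f(3) by simp
    finally show ?thesis by (simp add: gf)
  qed
  ultimately show "\<exists>h. linear h \<and> bij h \<and> (\<forall>X Y. h (b X Y) = a (h X) (h Y))"
    using g(1) by blast
qed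

lemma lie_iso_eq: "a = b \<Longrightarrow> lie_iso a b"
  unfolding lie_iso_def by (rule exI[of _ id]) (auto simp: linear_id)

lemma linear_lm: "linear (lm m00 m01 m10 m11)"
  by (rule linearI) (simp_all add: vec6_eq lm_def algebra_simps)

lemma lm_comp: "lm n00 n01 n10 n11 (lm m00 m01 m10 m11 X) =
   lm (n00*m00 + n01*m10) (n00*m01 + n01*m11) (n10*m00 + n11*m10) (n10*m01 + n11*m11) X"
  by (simp add: vec6_eq lm_def algebra_simps)

lemma lm_id: "lm 1 0 0 1 X = X"
  by (simp add: vec6_eq lm_def)

lemma bij_lm: assumes "m00*m11 - m01*m10 \<noteq> 0" shows "bij (lm m00 m01 m10 m11)"
proof -
  define d where "d = m00*m11 - m01*m10"
  have d: "d \<noteq> 0" using assms d_def by simp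
  have 1: "lm (m11/d) (-m01/d) (-m10/d) (m00/d) (lm m00 m01 m10 m11 X) = X" for X
    using d unfolding vec6_eq lm_def by (simp add: field_simps) (simp add: d_def algebra_simps)
  have 2: "lm m00 m01 m10 m11 (lm (m11/d) (-m01/d) (-m10/d) (m00/d) X) = X" for X
    using d unfolding vec6_eq lm_def by (simp add: field_simps) (simp add: d_def algebra_simps)
  show ?thesis using 1 2 by (metis bijI')
qed

lemma lie_iso_lm:
  assumes "ma*md - mb*mc \<noteq> 0"
    and "ma*p0 + mb*p1 = ma^2*g0 + 2*ma*mc*h0 + mc^2*k0"
    and "mc*p0 + md*p1 = ma^2*g1 + 2*ma*mc*h1 + mc^2*k1"
    and "ma*q0 + mb*q1 = ma*mb*g0 + (ma*md + mc*mb)*h0 + mc*md*k0"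
    and "mc*q0 + md*q1 = ma*mb*g1 + (ma*md + mc*mb)*h1 + mc*md*k1"
    and "ma*r0 + mb*r1 = mb^2*g0 + 2*mb*md*h0 + md^2*k0"
    and "mc*r0 + md*r1 = mb^2*g1 + 2*mb*md*h1 + md^2*k1"
  shows "lie_iso (tb p0 p1 q0 q1 r0 r1) (tb g0 g1 h0 h1 k0 k1)"
  unfolding lie_iso_def
  using linear_lm bij_lm[OF assms(1)] lm_hom[OF assms(2-7)] by blast

lemma lie_iso_byfun:
  assumes "linear f" "\<And>X. g (f X) = X" "\<And>X. f (g X) = X" "\<And>X Y. f (a X Y) = b (f X) (f Y)"
  shows "lie_iso a b"
  unfolding lie_iso_def using assms by (metis bijI')

lemma cross3_comp: "cross3 x y $ 1 = x$2*y$3 - x$3*y$2" "cross3 x y $ 2 = x$3*y$1 - x$1*y$3"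
   "cross3 x y $ 3 = x$1*y$2 - x$2*y$1"
  by (simp_all add: cross3_def vector_def)

lemma join_comp: "join a b $ 1 = a$1" "join a b $ 2 = a$2" "join a b $ 3 = a$3"
  "join a b $ 4 = b$1" "join a b $ 5 = b$2" "join a b $ 6 = b$3"
  by (simp_all add: join_def)

lemma lo_comp: "lo X $ 1 = X$1" "lo X $ 2 = X$2" "lo X $ 3 = X$3"
  by (simp_all add: lo_def)
lemma hi_comp: "hi X $ 1 = X$4" "hi X $ 2 = X$5" "hi X $ 3 = X$6"
  by (simp_all add: hi_def)

definition pm :: "real^6 \<Rightarrow> real^6" where
  "pm X = (\<chi> k. if k = 1 then X$1 else if k = 2 then X$3 else if k = 3 then X$5
     else if k = 4 then X$2 else if k = 5 then X$4 else X$6)"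
definition pmi :: "real^6 \<Rightarrow> real^6" where
  "pmi X = (\<chi> k. if k = 1 then X$1 else if k = 2 then X$4 else if k = 3 then X$2
     else if k = 4 then X$5 else if k = 5 then X$3 else X$6)"

lemma pm_linear: "linear pm" by (rule linearI) (simp_all add: vec6_eq pm_def)
lemma pm_inv: "pmi (pm X) = X" "pm (pmi X) = X" by (simp_all add: vec6_eq pm_def pmi_def)

lemmas model_simps = vec6_eq pm_def tb_def Let_def join_comp lo_comp hi_comp cross3_comp
   vector_add_component vector_minus_component zero_index

lemma model_so3_so3: "lie_iso (tb 1 0 0 0 0 1) so3_so3"
  by (rule lie_iso_byfun[OF pm_linear pm_inv]) (simp add: model_simps so3_so3_def algebra_simps)
lemma model_so3C: "lie_iso (tb 1 0 0 1 (-1) 0) so3C"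
  by (rule lie_iso_byfun[OF pm_linear pm_inv]) (simp add: model_simps so3C_def algebra_simps)
lemma model_semi: "lie_iso (tb 1 0 0 1 0 0) so3_semi_R3"
  by (rule lie_iso_byfun[OF pm_linear pm_inv]) (simp add: model_simps so3_semi_R3_def algebra_simps)
lemma model_sum: "lie_iso (tb 1 0 0 0 0 0) so3_sum_R3"
  by (rule lie_iso_byfun[OF pm_linear pm_inv]) (simp add: model_simps so3_sum_R3_def algebra_simps)

definition pn :: "real^6 \<Rightarrow> real^6" where
  "pn X = (\<chi> k. if k = 1 then X$1 else if k = 2 then X$3 else if k = 3 then X$5
     else if k = 4 then - X$6 else if k = 5 then X$4 else - X$2)"
definition pni :: "real^6 \<Rightarrow> real^6" where
  "pni X = (\<chi> k. if k = 1 then X$1 else if k = 2 then - X$6 else if k = 3 then X$2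
     else if k = 4 then X$5 else if k = 5 then X$3 else - X$4)"
lemma pn_linear: "linear pn" by (rule linearI) (simp_all add: vec6_eq pn_def)
lemma pn_inv: "pni (pn X) = X" "pn (pni X) = X" by (simp_all add: vec6_eq pn_def pni_def)

lemma model_nil: "lie_iso (tb 0 1 0 0 0 0) nil_alg"
  by (rule lie_iso_byfun[OF pn_linear pn_inv])
    (simp add: vec6_eq pn_def tb_def Let_def nil_alg_def bracket_of_d_def e2_def algebra_simps)

lemma unital_plus:
  assumes D: "p^2 + 4*q > 0"
  shows "lie_iso (tb 1 0 0 0 0 1) (tb p q 1 0 0 1)"
proof -
  define s where "s = sqrt (p^2 + 4*q)"
  have s0: "s > 0" using D s_def by simp
  have ss: "s^2 = p^2 + 4*q" using D s_def by simp
  have qq: "q = (s^2 - p^2)/4" using ss by simp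
  show ?thesis
    apply (rule lie_iso_lm[where ma = "1/s" and mc = "-((p - s)/2)/s" and mb = "-1/s" and md = "((p+s)/2)/s"])
    using s0 by (simp_all add: qq field_simps power2_eq_square)
qed

lemma unital_minus:
  assumes D: "p^2 + 4*q < 0"
  shows "lie_iso (tb 1 0 0 1 (-1) 0) (tb p q 1 0 0 1)"
proof -
  define w where "w = sqrt (-(p^2 + 4*q))"
  have s0: "w > 0" using D w_def by simp
  have ss: "w^2 = -(p^2 + 4*q)" using D w_def by simp
  show ?thesis
    apply (rule lie_iso_lm[where ma = "0" and mc = "1" and mb = "2/w" and md = "-p/w"])
    using s0 ss by (simp_all add: field_simps power2_eq_square; algebra)+
qed

lemma unital_zero:
  assumes D: "p^2 + 4*q = 0"
  shows "lie_iso (tb 1 0 0 1 0 0) (tb p q 1 0 0 1)"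
  apply (rule lie_iso_lm[where ma = "0" and mc = "1" and mb = "1" and md = "-p/2"])
  using D by (simp_all add: field_simps power2_eq_square; algebra)+

definition alp :: "real^2 \<Rightarrow> real^3 \<Rightarrow> real" where
  "alp x y = y$2*((x$1)^2 - (x$2)^2) + 2*x$1*x$2*(y$3 - y$1)"
definition bet :: "real^2 \<Rightarrow> real^3 \<Rightarrow> real" where
  "bet x y = -(y$1*(x$1)^2 + y$2*x$1*x$2 + y$3*(x$2)^2)"

lemma disc_ident: "(alp x y)^2 + 4*bet x y*resultant x y = disc y * ((x$1)^2 + (x$2)^2)^2"
  by (simp add: alp_def bet_def resultant_def disc_def power2_eq_square algebra_simps)

lemma x_nz: "(x::real^2) \<noteq> 0 \<Longrightarrow> (x$1)^2 + (x$2)^2 > 0"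
proof -
  assume "x \<noteq> 0"
  then have "x$1 \<noteq> 0 \<or> x$2 \<noteq> 0" by (simp add: vec_eq_iff forall_2)
  then show ?thesis by (metis add_pos_nonneg add_nonneg_pos power2_less_0 not_le zero_less_power2 zero_le_power2)
qed


lemma A_basis:
  assumes x: "x \<noteq> 0"
  shows "lie_iso (tb (alp x y) (bet x y) (resultant x y) 0 0 (resultant x y)) (g_xy x y)"
proof -
  have e: "x$1 * x$1 - (- x$2) * x$2 = (x$1)^2 + (x$2)^2" by (simp add: power2_eq_square)
  have N: "x$1 * x$1 - (- x$2) * x$2 \<noteq> 0" using x_nz[OF x] e by linarith
  show ?thesis unfolding g_eq
    apply (rule lie_iso_lm[where ma = "x$1" and mc = "x$2" and mb = "-x$2" and md = "x$1"])
    apply (rule N)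
    apply (simp_all add: resultant_def alp_def bet_def power2_eq_square algebra_simps)
    done
qed

lemma unital_scale:
  assumes r: "r \<noteq> 0"
  shows "lie_iso (tb (a/r) (b/r) 1 0 0 1) (tb a b r 0 0 r)"
  apply (rule lie_iso_lm[where ma = "1/r" and mc = "0" and mb = "0" and md = "1/r"])
  using r by (simp_all add: field_simps power2_eq_square)

lemma zero_sum:
  assumes a: "a \<noteq> 0"
  shows "lie_iso (tb 1 0 0 0 0 0) (tb a b 0 0 0 0)"
  apply (rule lie_iso_lm[where ma = "1/a" and mc = "b/a^2" and mb = "0" and md = "1"])
  using a by (simp_all add: field_simps power2_eq_square)

lemma zero_nil:
  assumes b: "b \<noteq> 0"
  shows "lie_iso (tb 0 1 0 0 0 0) (tb 0 b 0 0 0 0)"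
  apply (rule lie_iso_lm[where ma = "1" and mc = "0" and mb = "0" and md = "b"])
  using b by (simp_all add: field_simps power2_eq_square)

lemma scaled_disc:
  assumes x: "x \<noteq> 0" and r: "resultant x y \<noteq> 0"
  shows "(alp x y / resultant x y)^2 + 4 * (bet x y / resultant x y)
       = disc y * ((x$1)^2 + (x$2)^2)^2 / (resultant x y)^2"
proof -
  have "(alp x y / resultant x y)^2 + 4 * (bet x y / resultant x y)
       = ((alp x y)^2 + 4*bet x y*resultant x y) / (resultant x y)^2"
    using r by (simp add: field_simps power2_eq_square)
  then show ?thesis by (simp add: disc_ident)
qed

lemma bet_nz:
  assumes x: "x \<noteq> 0" and y: "y \<noteq> 0" and r: "resultant x y = 0" and a: "alp x y = 0"
  shows "bet x y \<noteq> 0"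
proof
  assume b: "bet x y = 0"
  define N where "N = (x$1)^2 + (x$2)^2"
  have N: "N > 0" using x_nz[OF x] N_def by simp
  have e1: "resultant x y - bet x y = (y$1 + y$3) * N"
    by (simp add: resultant_def bet_def N_def algebra_simps power2_eq_square)
  define u where "u = - bet x y - resultant x y"
  have u0: "u = 0" using b r u_def by simp
  have e2: "(y$1 - y$3) * N^2 = ((x$1)^2 - (x$2)^2) * u - 2*x$1*x$2*alp x y"
    by (simp add: u_def resultant_def bet_def alp_def N_def algebra_simps power2_eq_square)
  have e3: "y$2 * N^2 = 2*x$1*x$2*u + ((x$1)^2 - (x$2)^2) * alp x y"
    by (simp add: u_def resultant_def bet_def alp_def N_def algebra_simps power2_eq_square)
  have "y$1 + y$3 = 0" using e1 b r N by simp
  moreover have "y$1 - y$3 = 0" using e2 u0 a N by simp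
  moreover have "y$2 = 0" using e3 u0 a N by simp
  ultimately have "y = 0" by (simp add: vec_eq_iff forall_3)
  then show False using y by simp
qed

lemma lie_plus: assumes "p \<in> Mplus" shows "lie_iso (g_xy (fst p) (snd p)) so3_so3"
proof -
  obtain x y where p: "p = (x, y)" by (cases p)
  have x: "x \<noteq> 0" and r: "resultant x y \<noteq> 0" and d: "disc y > 0"
    using assms by (auto simp: p Mplus_def Mrep_def)
  have "(alp x y / resultant x y)^2 + 4 * (bet x y / resultant x y) > 0"
    unfolding scaled_disc[OF x r] using d x_nz[OF x] r by (intro divide_pos_pos mult_pos_pos) auto
  note U = unital_plus[OF this]
  show ?thesis unfolding p fst_conv snd_conv
    by (meson A_basis[OF x] unital_scale[OF r] U model_so3_so3 lie_iso_sym lie_iso_trans)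
qed

lemma lie_minus: assumes "p \<in> Mminus" shows "lie_iso (g_xy (fst p) (snd p)) so3C"
proof -
  obtain x y where p: "p = (x, y)" by (cases p)
  have x: "x \<noteq> 0" and r: "resultant x y \<noteq> 0" and d: "disc y < 0"
    using assms by (auto simp: p Mminus_def Mrep_def)
  have "(alp x y / resultant x y)^2 + 4 * (bet x y / resultant x y) < 0"
    unfolding scaled_disc[OF x r] using d x_nz[OF x] r
    by (intro divide_neg_pos mult_neg_pos) auto
  note U = unital_minus[OF this]
  show ?thesis unfolding p fst_conv snd_conv
    by (meson A_basis[OF x] unital_scale[OF r] U model_so3C lie_iso_sym lie_iso_trans)
qed

lemma lie_S1: assumes "p \<in> S1 - Cset" shows "lie_iso (g_xy (fst p) (snd p)) so3_semi_R3"
proof -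
  obtain x y where p: "p = (x, y)" by (cases p)
  have x: "x \<noteq> 0" and r: "resultant x y \<noteq> 0" and d: "disc y = 0"
    using assms by (auto simp: p S1_def S2_def Cset_def Mrep_def)
  have "(alp x y / resultant x y)^2 + 4 * (bet x y / resultant x y) = 0"
    unfolding scaled_disc[OF x r] using d by simp
  note U = unital_zero[OF this]
  show ?thesis unfolding p fst_conv snd_conv
    by (meson A_basis[OF x] unital_scale[OF r] U model_semi lie_iso_sym lie_iso_trans)
qed

lemma lie_S2: assumes "p \<in> S2 - Cset" shows "lie_iso (g_xy (fst p) (snd p)) so3_sum_R3"
proof -
  obtain x y where p: "p = (x, y)" by (cases p)
  have x: "x \<noteq> 0" and r: "resultant x y = 0" and d: "disc y \<noteq> 0"
    using assms by (auto simp: p S1_def S2_def Cset_def Mrep_def)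
  have "(alp x y)^2 = disc y * ((x$1)^2 + (x$2)^2)^2" using disc_ident[of x y] r by simp
  then have a: "alp x y \<noteq> 0" using d x_nz[OF x] by auto
  have B: "lie_iso (tb (alp x y) (bet x y) 0 0 0 0) (g_xy x y)" using A_basis[OF x, of y] r by simp
  show ?thesis unfolding p fst_conv snd_conv
    by (meson B zero_sum[OF a] model_sum lie_iso_sym lie_iso_trans)
qed

lemma lie_C: assumes "p \<in> Cset" shows "lie_iso (g_xy (fst p) (snd p)) nil_alg"
proof -
  obtain x y where p: "p = (x, y)" by (cases p)
  have x: "x \<noteq> 0" and y: "y \<noteq> 0" and r: "resultant x y = 0" and d: "disc y = 0"
    using assms by (auto simp: p S1_def S2_def Cset_def Mrep_def)
  have "(alp x y)^2 = 0" using disc_ident[of x y] r d by simp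
  then have a: "alp x y = 0" by simp
  have b: "bet x y \<noteq> 0" using bet_nz[OF x y r a] .
  have B: "lie_iso (tb 0 (bet x y) 0 0 0 0) (g_xy x y)" using A_basis[OF x, of y] r a by simp
  show ?thesis unfolding p fst_conv snd_conv
    by (meson B zero_nil[OF b] model_nil lie_iso_sym lie_iso_trans)
qed



lemma two_comp:
  fixes g :: "'a::real_normed_vector \<Rightarrow> real"
  assumes SAB: "S = A \<union> B" and A0: "A \<noteq> {}" and B0: "B \<noteq> {}"
    and cA: "connected A" and cB: "connected B" and g: "continuous_on S g"
    and gA: "\<forall>q\<in>A. g q > 0" and gB: "\<forall>q\<in>B. g q < 0"
  shows "components S = {A, B}"
proof -
  have key: "D \<subseteq> A \<or> D \<subseteq> B" if D: "connected D" "D \<subseteq> S" for D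
  proof (rule ccontr)
    assume "\<not> (D \<subseteq> A \<or> D \<subseteq> B)"
    then obtain d1 d2 where d1: "d1 \<in> D" "d1 \<notin> A" and d2: "d2 \<in> D" "d2 \<notin> B" by blast
    have "d1 \<in> B" "d2 \<in> A" using d1 d2 D SAB by auto
    then have g1: "g d1 < 0" and g2: "g d2 > 0" using gA gB by auto
    have "connected (g ` D)"
      using connected_continuous_image[OF continuous_on_subset[OF g D(2)] D(1)] .
    then have "0 \<in> g ` D"
      unfolding connected_iff_interval using d1 d2 g1 g2
      by (metis image_eqI less_imp_le)
    then obtain d where "d \<in> D" "g d = 0" by auto
    then show False using D SAB gA gB by force
  qed
  have AB: "A \<inter> B = {}" using gA gB by force
  have compA: "A \<in> components S"
    unfolding in_components_maximal
  proof (intro conjI allI impI)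
    show "A \<noteq> {}" "A \<subseteq> S" "connected A" using A0 SAB cA by auto
    fix D assume D: "D \<noteq> {} \<and> A \<subseteq> D \<and> D \<subseteq> S \<and> connected D"
    then have "D \<subseteq> A \<or> D \<subseteq> B" using key by blast
    then show "D = A" using D AB A0 by blast
  qed
  have compB: "B \<in> components S"
    unfolding in_components_maximal
  proof (intro conjI allI impI)
    show "B \<noteq> {}" "B \<subseteq> S" "connected B" using B0 SAB cB by auto
    fix D assume D: "D \<noteq> {} \<and> B \<subseteq> D \<and> D \<subseteq> S \<and> connected D"
    then have "D \<subseteq> A \<or> D \<subseteq> B" using key by blast
    then show "D = B" using D AB B0 by blast
  qed
  have "C = A \<or> C = B" if C: "C \<in> components S" for C
  proof -
    have C': "C \<noteq> {}" "C \<subseteq> S" "connected C"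
      "\<And>D. D \<noteq> {} \<and> C \<subseteq> D \<and> D \<subseteq> S \<and> connected D \<Longrightarrow> D = C"
      using C unfolding in_components_maximal by auto
    have "C \<subseteq> A \<or> C \<subseteq> B" using key C' by blast
    then show ?thesis
      using C'(4)[of A] C'(4)[of B] A0 B0 cA cB SAB by blast
  qed
  then show ?thesis using compA compB by blast
qed

definition Yc :: "real^2 \<Rightarrow> real \<Rightarrow> real \<Rightarrow> real \<Rightarrow> real^3" where
  "Yc x z1 z2 z3 = (let N = (x$1)^2 + (x$2)^2 in
     (\<chi> i. if i = 1 then (z1*(x$1)^2 - z2*x$1*x$2 + z3*(x$2)^2) / N^2
           else if i = 2 then (2*z1*x$1*x$2 + z2*((x$1)^2 - (x$2)^2) - 2*z3*x$1*x$2) / N^2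
           else (z1*(x$2)^2 + z2*x$1*x$2 + z3*(x$1)^2) / N^2))"

lemma Yc_comp: "Yc x z1 z2 z3 $ 1 = (z1*(x$1)^2 - z2*x$1*x$2 + z3*(x$2)^2) / ((x$1)^2 + (x$2)^2)^2"
  "Yc x z1 z2 z3 $ 2 = (2*z1*x$1*x$2 + z2*((x$1)^2 - (x$2)^2) - 2*z3*x$1*x$2) / ((x$1)^2 + (x$2)^2)^2"
  "Yc x z1 z2 z3 $ 3 = (z1*(x$2)^2 + z2*x$1*x$2 + z3*(x$1)^2) / ((x$1)^2 + (x$2)^2)^2"
  by (simp_all add: Yc_def Let_def)

lemma Yc_res: assumes x: "x \<noteq> 0" shows "resultant x (Yc x z1 z2 z3) = z3"
proof -
  define M where "M = ((x$1)^2 + (x$2)^2)^2"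
  have M: "M \<noteq> 0" using x_nz[OF x] M_def by (metis zero_less_power less_irrefl)
  have "resultant x (Yc x z1 z2 z3) * M = z3 * M"
    unfolding resultant_def Yc_comp M_def[symmetric] using M
    by (simp add: field_simps) (unfold M_def, algebra)
  then show ?thesis using M by simp
qed

lemma Yc_disc: assumes x: "x \<noteq> 0"
  shows "disc (Yc x z1 z2 z3) * ((x$1)^2 + (x$2)^2)^2 = z2^2 - 4*z1*z3"
proof -
  define M where "M = ((x$1)^2 + (x$2)^2)^2"
  have M: "M \<noteq> 0" using x_nz[OF x] M_def by (metis zero_less_power less_irrefl)
  have "disc (Yc x z1 z2 z3) * M * M = (z2^2 - 4*z1*z3) * M"
    unfolding disc_def Yc_comp M_def[symmetric] using M
    by (simp add: field_simps) (unfold M_def, algebra)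
  then have "disc (Yc x z1 z2 z3) * M = z2^2 - 4*z1*z3" using M by (metis mult_right_cancel)
  then show ?thesis by (simp only: M_def)
qed

lemma Yc_inv: assumes x: "x \<noteq> 0" shows "Yc x (- bet x y) (alp x y) (resultant x y) = y"
proof -
  define M where "M = ((x$1)^2 + (x$2)^2)^2"
  have M: "M \<noteq> 0" using x_nz[OF x] M_def by (metis zero_less_power less_irrefl)
  let ?Y = "Yc x (- bet x y) (alp x y) (resultant x y)"
  have h1: "?Y $ 1 * M = y $ 1 * M"
    unfolding Yc_comp M_def[symmetric] using M
    by (simp add: field_simps; unfold M_def bet_def alp_def resultant_def; algebra)
  have h2: "?Y $ 2 * M = y $ 2 * M"
    unfolding Yc_comp M_def[symmetric] using M
    by (simp add: field_simps; unfold M_def bet_def alp_def resultant_def; algebra)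
  have h3: "?Y $ 3 * M = y $ 3 * M"
    unfolding Yc_comp M_def[symmetric] using M
    by (simp add: field_simps; unfold M_def bet_def alp_def resultant_def; algebra)
  have "?Y $ i = y $ i" for i using M h1 h2 h3 exhaust_3[of i] by auto
  then show ?thesis using M by (simp add: vec_eq_iff)
qed

definition Dom :: "((real^2) \<times> (real^3)) set" where
  "Dom = (- {0}) \<times> {v. 0 < v$1 \<and> 0 < v$3}"
definition Php :: "(real^2) \<times> (real^3) \<Rightarrow> (real^2) \<times> (real^3)" where
  "Php q = (fst q, Yc (fst q) ((snd q)$2^2/(4*(snd q)$3) - (snd q)$1) ((snd q)$2) ((snd q)$3))"
definition Phm :: "(real^2) \<times> (real^3) \<Rightarrow> (real^2) \<times> (real^3)" where
  "Phm q = (fst q, Yc (fst q) ((snd q)$2^2/(4*(snd q)$3) + (snd q)$1) ((snd q)$2) ((snd q)$3))"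

lemma pos_comb: "0 < a \<Longrightarrow> 0 < b \<Longrightarrow> 0 \<le> u \<Longrightarrow> 0 \<le> v \<Longrightarrow> u + v = 1 \<Longrightarrow> 0 < u * a + v * b"
  for a b u v :: real
proof -
  assume h: "0 < a" "0 < b" "0 \<le> u" "0 \<le> v" "u + v = 1"
  show ?thesis
  proof (cases "u = 0")
    case True then show ?thesis using h by simp
  next
    case False then have "0 < u * a" using h by simp
    moreover have "0 \<le> v * b" using h by simp
    ultimately show ?thesis by simp
  qed
qed

lemma Dom_pc: "path_connected Dom"
proof -
  have "path_connected (- {0::real^2})"
    by (rule path_connected_punctured_universe) simp
  moreover have "convex {v::real^3. 0 < v$1 \<and> 0 < v$3}"
    unfolding convex_def by (auto intro!: pos_comb)
  ultimately show ?thesis unfolding Dom_def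
    using path_connected_Times convex_imp_path_connected by blast
qed

lemma M_emb_cont: "continuous_on Mrep M_emb"
  unfolding M_emb_def proj_emb_def Mrep_def
  by (intro continuous_intros) (auto simp: case_prod_beta)

lemma cont_if_const: "continuous_on S f \<Longrightarrow> continuous_on S g \<Longrightarrow> continuous_on S (\<lambda>x. if P then f x else g x)"
  by (cases P) auto

lemma Php_cont: "continuous_on Dom Php"
  unfolding Php_def Yc_def Let_def Dom_def
  by (intro continuous_intros cont_if_const) (auto dest!: x_nz)

lemma Phm_cont: "continuous_on Dom Phm"
  unfolding Phm_def Yc_def Let_def Dom_def
  by (intro continuous_intros cont_if_const) (auto dest!: x_nz)

lemma xN2: "(x::real^2) \<noteq> 0 \<Longrightarrow> ((x$1)^2 + (x$2)^2)^2 > 0"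
  using x_nz by (metis zero_less_power)

lemma Yc_nz: assumes "x \<noteq> 0" "z3 \<noteq> 0" shows "Yc x z1 z2 z3 \<noteq> 0"
  using Yc_res[OF assms(1), of z1 z2 z3] assms(2) by (auto simp: resultant_def)

lemma disc_pos_from: fixes x :: "real^2" assumes x: "x \<noteq> 0" and h: "d * ((x$1)^2 + (x$2)^2)^2 = c" and c: "c > 0"
  shows "d > 0"
proof -
  have "((x$1)^2 + (x$2)^2)^2 > 0" using xN2[OF x] .
  then show ?thesis using h c by (metis zero_less_mult_pos2)
qed

lemma disc_neg_from: fixes x :: "real^2" assumes x: "x \<noteq> 0" and h: "d * ((x$1)^2 + (x$2)^2)^2 = c" and c: "c < 0"
  shows "d < 0"
proof -
  have N: "((x$1)^2 + (x$2)^2)^2 > 0" using xN2[OF x] .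
  show ?thesis
  proof (rule ccontr)
    assume "\<not> d < 0" then have "d * ((x$1)^2 + (x$2)^2)^2 \<ge> 0" using N by simp
    then show False using h c by simp
  qed
qed

lemma Php_in: assumes q: "q \<in> Dom" shows "Php q \<in> Mplus"
proof -
  obtain x v where qq: "q = (x, v)" by (cases q)
  have x: "x \<noteq> 0" and v1: "0 < v$1" and v3: "0 < v$3" using q by (auto simp: qq Dom_def)
  define z1 where "z1 = v$2^2/(4* v$3) - v$1"
  have e: "(v$2)^2 - 4*z1* v$3 = 4* v$1* v$3" using v3 by (simp add: z1_def field_simps)
  have r: "resultant x (Yc x z1 (v$2) (v$3)) = v$3" using Yc_res[OF x] .
  have d: "disc (Yc x z1 (v$2) (v$3)) > 0"
    using disc_pos_from[OF x Yc_disc[OF x, of z1 "v$2" "v$3"]] e v1 v3 by simp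
  show ?thesis using x r d v3 Yc_nz[OF x, of "v$3" z1 "v$2"]
    by (simp add: Php_def qq z1_def Mplus_def Mrep_def)
qed

lemma Phm_in: assumes q: "q \<in> Dom" shows "Phm q \<in> Mminus"
proof -
  obtain x v where qq: "q = (x, v)" by (cases q)
  have x: "x \<noteq> 0" and v1: "0 < v$1" and v3: "0 < v$3" using q by (auto simp: qq Dom_def)
  define z1 where "z1 = v$2^2/(4* v$3) + v$1"
  have e: "(v$2)^2 - 4*z1* v$3 = - (4* v$1* v$3)" using v3 by (simp add: z1_def field_simps)
  have r: "resultant x (Yc x z1 (v$2) (v$3)) = v$3" using Yc_res[OF x] .
  have d: "disc (Yc x z1 (v$2) (v$3)) < 0"
    using disc_neg_from[OF x Yc_disc[OF x, of z1 "v$2" "v$3"]] e v1 v3 by simp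
  show ?thesis using x r d v3 Yc_nz[OF x, of "v$3" z1 "v$2"]
    by (simp add: Phm_def qq z1_def Mminus_def Mrep_def)
qed

lemma proj_emb_neg: "proj_emb (- y) = proj_emb y"
  by (simp add: proj_emb_def)

lemma res_neg: "resultant x (- y) = - resultant x y" by (simp add: resultant_def)
lemma disc_neg: "disc (- y) = disc y" by (simp add: disc_def)

lemma flip_pos: assumes "resultant x y \<noteq> 0"
  obtains y' where "resultant x y' > 0" "disc y' = disc y" "M_emb (x, y') = M_emb (x, y)"
proof (cases "resultant x y > 0")
  case True then show ?thesis using that by blast
next
  case False
  then have "resultant x (- y) > 0" using assms by (simp add: res_neg)
  then show ?thesis using that[of "- y"] by (simp add: disc_neg M_emb_def proj_emb_neg)
qed

lemma Mplus_img: "M_emb ` Mplus = (M_emb \<circ> Php) ` Dom"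
proof
  show "(M_emb \<circ> Php) ` Dom \<subseteq> M_emb ` Mplus" using Php_in by auto
  show "M_emb ` Mplus \<subseteq> (M_emb \<circ> Php) ` Dom"
  proof
    fix w assume "w \<in> M_emb ` Mplus"
    then obtain x y where p: "(x, y) \<in> Mplus" and w: "w = M_emb (x, y)" by auto
    have x: "x \<noteq> 0" and r: "resultant x y \<noteq> 0" and d: "disc y > 0"
      using p by (auto simp: Mplus_def Mrep_def)
    obtain y' where r': "resultant x y' > 0" and d': "disc y' = disc y" and e: "M_emb (x, y') = M_emb (x, y)"
      using flip_pos[OF r] by blast
    define c where "c = (alp x y')^2 + 4*bet x y'*resultant x y'"
    have c: "c > 0" unfolding c_def disc_ident using d d' xN2[OF x] by (simp add: mult_pos_pos)
    define v :: "real^3" where "v = (\<chi> i. if i = 1 then c/(4*resultant x y') else if i = 2 then alp x y' else resultant x y')"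
    have v: "v$1 = c/(4*resultant x y')" "v$2 = alp x y'" "v$3 = resultant x y'" by (simp_all add: v_def)
    have inD: "(x, v) \<in> Dom" using x r' c v by (simp add: Dom_def)
    have "v$2^2/(4* v$3) - v$1 = - bet x y'" unfolding v c_def using r' by (simp add: field_simps)
    then have "Php (x, v) = (x, y')" unfolding Php_def using Yc_inv[OF x, of y'] v by simp
    then show "w \<in> (M_emb \<circ> Php) ` Dom" using inD w e by (metis comp_apply image_eqI)
  qed
qed

lemma Mminus_img: "M_emb ` Mminus = (M_emb \<circ> Phm) ` Dom"
proof
  show "(M_emb \<circ> Phm) ` Dom \<subseteq> M_emb ` Mminus" using Phm_in by auto
  show "M_emb ` Mminus \<subseteq> (M_emb \<circ> Phm) ` Dom"
  proof
    fix w assume "w \<in> M_emb ` Mminus"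
    then obtain x y where p: "(x, y) \<in> Mminus" and w: "w = M_emb (x, y)" by auto
    have x: "x \<noteq> 0" and r: "resultant x y \<noteq> 0" and d: "disc y < 0"
      using p by (auto simp: Mminus_def Mrep_def)
    obtain y' where r': "resultant x y' > 0" and d': "disc y' = disc y" and e: "M_emb (x, y') = M_emb (x, y)"
      using flip_pos[OF r] by blast
    define c where "c = (alp x y')^2 + 4*bet x y'*resultant x y'"
    have c: "c < 0" unfolding c_def disc_ident using d d' xN2[OF x] by (simp add: mult_neg_pos)
    define v :: "real^3" where "v = (\<chi> i. if i = 1 then - c/(4*resultant x y') else if i = 2 then alp x y' else resultant x y')"
    have v: "v$1 = - c/(4*resultant x y')" "v$2 = alp x y'" "v$3 = resultant x y'" by (simp_all add: v_def)
    have inD: "(x, v) \<in> Dom" using x r' c v by (simp add: Dom_def divide_neg_pos)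
    have "v$2^2/(4* v$3) + v$1 = - bet x y'" unfolding v c_def using r' by (simp add: field_simps)
    then have "Phm (x, v) = (x, y')" unfolding Phm_def using Yc_inv[OF x, of y'] v by simp
    then show "w \<in> (M_emb \<circ> Phm) ` Dom" using inD w e by (metis comp_apply image_eqI)
  qed
qed

lemma Mplus_sub: "Mplus \<subseteq> Mrep" by (auto simp: Mplus_def)
lemma Mminus_sub: "Mminus \<subseteq> Mrep" by (auto simp: Mminus_def)

lemma Mplus_conn: "connected (M_emb ` Mplus)"
proof -
  have "continuous_on Dom (M_emb \<circ> Php)"
    by (rule continuous_on_compose[OF Php_cont continuous_on_subset[OF M_emb_cont]])
       (use Php_in Mplus_sub in blast)
  then show ?thesis unfolding Mplus_img
    by (intro path_connected_imp_connected path_connected_continuous_image Dom_pc)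
qed

lemma Mminus_conn: "connected (M_emb ` Mminus)"
proof -
  have "continuous_on Dom (M_emb \<circ> Phm)"
    by (rule continuous_on_compose[OF Phm_cont continuous_on_subset[OF M_emb_cont]])
       (use Phm_in Mminus_sub in blast)
  then show ?thesis unfolding Mminus_img
    by (intro path_connected_imp_connected path_connected_continuous_image Dom_pc)
qed

definition gfun :: "(real^2^2) \<times> (real^3^3) \<Rightarrow> real" where
  "gfun q = snd q $ 2 $ 2 - 4 * (snd q $ 1 $ 3)"

lemma gfun_cont: "continuous_on S gfun"
  unfolding gfun_def by (intro continuous_intros)

lemma gfun_emb: assumes y: "y \<noteq> 0" shows "gfun (M_emb (x, y)) = disc y / (y \<bullet> y)"
proof -
  have "y \<bullet> y \<noteq> 0" using y by simp
  then show ?thesis by (simp add: gfun_def M_emb_def proj_emb_def disc_def field_simps power2_eq_square)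
qed

lemma gfun_plus: "\<forall>q\<in>M_emb ` Mplus. gfun q > 0"
proof
  fix q assume "q \<in> M_emb ` Mplus"
  then obtain x y where p: "(x,y) \<in> Mplus" "q = M_emb (x,y)" by auto
  have y: "y \<noteq> 0" and d: "disc y > 0" using p by (auto simp: Mplus_def Mrep_def)
  have "y \<bullet> y > 0" using y by simp
  then show "gfun q > 0" using p(2) gfun_emb[OF y, of x] d by simp
qed

lemma gfun_minus: "\<forall>q\<in>M_emb ` Mminus. gfun q < 0"
proof
  fix q assume "q \<in> M_emb ` Mminus"
  then obtain x y where p: "(x,y) \<in> Mminus" "q = M_emb (x,y)" by auto
  have y: "y \<noteq> 0" and d: "disc y < 0" using p by (auto simp: Mminus_def Mrep_def)
  have "y \<bullet> y > 0" using y by simp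
  then show "gfun q < 0" using p(2) gfun_emb[OF y, of x] d by (simp add: divide_neg_pos)
qed

definition x0 :: "real^2" where "x0 = (\<chi> i. if i = 1 then 1 else 0)"
definition yp :: "real^3" where "yp = (\<chi> i. if i = 1 then 1 else if i = 2 then 0 else -1)"
definition ym :: "real^3" where "ym = (\<chi> i. if i = 1 then 1 else if i = 2 then 0 else 1)"

lemma Mplus_ne: "Mplus \<noteq> {}"
proof -
  have "x0 \<noteq> 0" by (auto simp: x0_def vec_eq_iff)
  moreover have "yp \<noteq> 0"
  proof
    assume "yp = 0" then have "yp $ 1 = 0" by simp
    then show False by (simp add: yp_def)
  qed
  moreover have "disc yp > 0" "resultant x0 yp \<noteq> 0" by (simp_all add: disc_def resultant_def x0_def yp_def)
  ultimately have "(x0, yp) \<in> Mplus" by (simp add: Mplus_def Mrep_def)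
  then show ?thesis by blast
qed

lemma Mminus_ne: "Mminus \<noteq> {}"
proof -
  have "x0 \<noteq> 0" by (auto simp: x0_def vec_eq_iff)
  moreover have "ym \<noteq> 0"
  proof
    assume "ym = 0" then have "ym $ 1 = 0" by simp
    then show False by (simp add: ym_def)
  qed
  moreover have "disc ym < 0" "resultant x0 ym \<noteq> 0" by (simp_all add: disc_def resultant_def x0_def ym_def)
  ultimately have "(x0, ym) \<in> Mminus" by (simp add: Mminus_def Mrep_def)
  then show ?thesis by blast
qed

lemma Mrep_split: "Mrep - (S1 \<union> S2) = Mplus \<union> Mminus"
  by (auto simp: Mrep_def S1_def S2_def Mplus_def Mminus_def)

lemma components_part:
  "components (M_emb ` (Mrep - (S1 \<union> S2))) = {M_emb ` Mplus, M_emb ` Mminus}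
   \<and> M_emb ` Mplus \<noteq> M_emb ` Mminus"
proof
  show "components (M_emb ` (Mrep - (S1 \<union> S2))) = {M_emb ` Mplus, M_emb ` Mminus}"
    by (rule two_comp[OF _ _ _ Mplus_conn Mminus_conn gfun_cont gfun_plus gfun_minus])
       (use Mplus_ne Mminus_ne in \<open>auto simp: Mrep_split\<close>)
  show "M_emb ` Mplus \<noteq> M_emb ` Mminus"
    using gfun_plus gfun_minus Mplus_ne by fastforce
qed


theorem theorem3p12:
  shows "components (M_emb ` (Mrep - (S1 \<union> S2))) = {M_emb ` Mplus, M_emb ` Mminus}
         \<and> M_emb ` Mplus \<noteq> M_emb ` Mminus
         \<and> (\<forall>p \<in> Mplus. lie_iso (g_xy (fst p) (snd p)) so3_so3)
         \<and> (\<forall>p \<in> Mminus. lie_iso (g_xy (fst p) (snd p)) so3C)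
         \<and> (\<forall>p \<in> S1 - Cset. lie_iso (g_xy (fst p) (snd p)) so3_semi_R3)
         \<and> (\<forall>p \<in> S2 - Cset. lie_iso (g_xy (fst p) (snd p)) so3_sum_R3)
         \<and> (\<forall>p \<in> Cset. lie_iso (g_xy (fst p) (snd p)) nil_alg)"
proof (intro conjI)
  show "components (M_emb ` (Mrep - (S1 \<union> S2))) = {M_emb ` Mplus, M_emb ` Mminus}"
    using components_part by (rule conjunct1)
  show "M_emb ` Mplus \<noteq> M_emb ` Mminus"
    using components_part by (rule conjunct2)
  show "\<forall>p \<in> Mplus. lie_iso (g_xy (fst p) (snd p)) so3_so3" using lie_plus by (rule ballI)
  show "\<forall>p \<in> Mminus. lie_iso (g_xy (fst p) (snd p)) so3C" using lie_minus by (rule ballI)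
  show "\<forall>p \<in> S1 - Cset. lie_iso (g_xy (fst p) (snd p)) so3_semi_R3" using lie_S1 by (rule ballI)
  show "\<forall>p \<in> S2 - Cset. lie_iso (g_xy (fst p) (snd p)) so3_sum_R3" using lie_S2 by (rule ballI)
  show "\<forall>p \<in> Cset. lie_iso (g_xy (fst p) (snd p)) nil_alg" using lie_C by (rule ballI)
qed

end
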